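(* Let $R$ be a commutative ring with $1\neq 0$, $S\subseteq R$ a multiplicatively closed subset, and $M$ a distributive $R$-module. If $N$ and $K$ are $S$-copure submodules of $M$, then $N\cap K$ is an $S$-copure submodule of $M$.
   Context: All rings are commutative with $1\neq 0$ and all modules are unital. A multiplicatively closed subset (m.c.s.) $S$ of $R$ is a subset with $0\notin S$, $1\in S$, and $ss'\in S$ for all $s,s'\in S$. $M$ is distributive if its lattice of submodules is distributive, i.e., $A\cap(B+C)=(A\cap B)+(A\cap C)$ for all submodules $A,B,C$. For an ideal $I$ and submodule $L$, $(L:_M I)=\{m\in M: Im\subseteq L\}$ and $(0:_M I)=\{m\in M: Im=0\}$. A submodule $L$ of $M$ is $S$-copure if there exists $s\in S$ such that $s(L:_M I)\subseteq L+(0:_M I)$ for every ideal $I$ of $R$. *)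

theory Defs
  imports Complex_Main
begin

text \<open>Modules over a commutative ring 'a (class comm_ring_1, so 1 \<noteq> 0) are given by
  the HOL locale module with scalar multiplication scale; submodules are module.subspace.\<close>

definition mcs :: "'a::comm_ring_1 set \<Rightarrow> bool" where
  "mcs S \<longleftrightarrow> 0 \<notin> S \<and> 1 \<in> S \<and> (\<forall>s\<in>S. \<forall>t\<in>S. s * t \<in> S)"

definition ring_ideal :: "'a::comm_ring_1 set \<Rightarrow> bool" where
  "ring_ideal I \<longleftrightarrow> 0 \<in> I \<and> (\<forall>x\<in>I. \<forall>y\<in>I. x + y \<in> I) \<and> (\<forall>r. \<forall>x\<in>I. r * x \<in> I)"

definition sub_sum :: "'b::ab_group_add set \<Rightarrow> 'b set \<Rightarrow> 'b set" where
  "sub_sum A B = {a + b | a b. a \<in> A \<and> b \<in> B}"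

definition distributive_module :: "('a::comm_ring_1 \<Rightarrow> 'b::ab_group_add \<Rightarrow> 'b) \<Rightarrow> bool" where
  "distributive_module scale \<longleftrightarrow>
     (\<forall>A B C. module.subspace scale A \<longrightarrow> module.subspace scale B \<longrightarrow> module.subspace scale C \<longrightarrow>
        A \<inter> sub_sum B C = sub_sum (A \<inter> B) (A \<inter> C))"

definition colon :: "('a::comm_ring_1 \<Rightarrow> 'b::ab_group_add \<Rightarrow> 'b) \<Rightarrow> 'b set \<Rightarrow> 'a set \<Rightarrow> 'b set" where
  "colon scale L I = {m. {scale a m | a. a \<in> I} \<subseteq> L}"

definition S_copure :: "('a::comm_ring_1 \<Rightarrow> 'b::ab_group_add \<Rightarrow> 'b) \<Rightarrow> 'a set \<Rightarrow> 'b set \<Rightarrow> bool" where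
  "S_copure scale S L \<longleftrightarrow> module.subspace scale L \<and>
     (\<exists>s\<in>S. \<forall>I. ring_ideal I \<longrightarrow>
        {scale s m | m. m \<in> colon scale L I} \<subseteq> sub_sum L (colon scale {0} I))"

end

theory Submission
  imports Defs
begin

lemma ann_subspace:
  assumes "module scale"
  shows "module.subspace scale (colon scale {0} I)"
proof -
  interpret module scale by fact
  show ?thesis unfolding subspace_def colon_def
  proof (intro conjI ballI allI)
    show "0 \<in> {m. {scale a m |a. a \<in> I} \<subseteq> {0}}" by auto
  next
    fix x y assume "x \<in> {m. {scale a m |a. a \<in> I} \<subseteq> {0}}" "y \<in> {m. {scale a m |a. a \<in> I} \<subseteq> {0}}"
    hence hx: "\<And>a. a \<in> I \<Longrightarrow> scale a x = 0" and hy: "\<And>a. a \<in> I \<Longrightarrow> scale a y = 0" by blast+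
    have "\<And>a. a \<in> I \<Longrightarrow> scale a (x + y) = 0" using hx hy by (simp add: scale_right_distrib)
    thus "x + y \<in> {m. {scale a m |a. a \<in> I} \<subseteq> {0}}" by blast
  next
    fix c x assume h: "x \<in> {m. {scale a m |a. a \<in> I} \<subseteq> {0}}"
    { fix a assume "a \<in> I"
      hence "scale a x = 0" using h by blast
      hence "scale a (scale c x) = 0" by (metis scale_scale mult.commute scale_zero_right) }
    thus "scale c x \<in> {m. {scale a m |a. a \<in> I} \<subseteq> {0}}" by blast
  qed
qed

theorem theorem3p5:
  fixes scale :: "'a::comm_ring_1 \<Rightarrow> 'b::ab_group_add \<Rightarrow> 'b"
    and S :: "'a set" and N K :: "'b set"
  assumes "module scale"
    and "mcs S"
    and "distributive_module scale"
    and "S_copure scale S N"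
    and "S_copure scale S K"
  shows "S_copure scale S (N \<inter> K)"
proof -
  interpret module scale by fact
  have sN: "subspace N" and sK: "subspace K"
    using assms(4,5) unfolding S_copure_def by auto
  obtain s where s: "s \<in> S" and hs: "\<And>I. ring_ideal I \<Longrightarrow>
        {scale s m | m. m \<in> colon scale N I} \<subseteq> sub_sum N (colon scale {0} I)"
    using assms(4) unfolding S_copure_def by blast
  obtain t where t: "t \<in> S" and ht: "\<And>I. ring_ideal I \<Longrightarrow>
        {scale t m | m. m \<in> colon scale K I} \<subseteq> sub_sum K (colon scale {0} I)"
    using assms(5) unfolding S_copure_def by blast
  have st: "s * t \<in> S" using assms(2) s t unfolding mcs_def by blast
  have "\<forall>I. ring_ideal I \<longrightarrow>
        {scale (s*t) m | m. m \<in> colon scale (N \<inter> K) I} \<subseteq> sub_sum (N \<inter> K) (colon scale {0} I)"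
  proof (intro allI impI subsetI)
    fix I x assume I: "ring_ideal I"
      and "x \<in> {scale (s*t) m | m. m \<in> colon scale (N \<inter> K) I}"
    then obtain m where m: "m \<in> colon scale (N \<inter> K) I" and x: "x = scale (s*t) m" by blast
    define Z where "Z = colon scale {0} I"
    have sZ: "subspace Z" unfolding Z_def using ann_subspace[OF assms(1)] .
    have mN: "m \<in> colon scale N I" and mK: "m \<in> colon scale K I"
      using m unfolding colon_def by auto
    have "scale s m \<in> sub_sum N Z" using hs[OF I] mN Z_def by blast
    then obtain n a where n: "n \<in> N" and a: "a \<in> Z" and sm: "scale s m = n + a"
      unfolding sub_sum_def by blast
    have "scale t m \<in> sub_sum K Z" using ht[OF I] mK Z_def by blast
    then obtain k b where k: "k \<in> K" and b: "b \<in> Z" and tm: "scale t m = k + b"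
      unfolding sub_sum_def by blast
    have x1: "x = scale t n + scale t a"
      using x sm by (metis scale_scale mult.commute scale_right_distrib)
    have x2: "x = scale s k + scale s b"
      using x tm by (metis scale_scale scale_right_distrib)
    have tn: "scale t n \<in> N" using sN n unfolding subspace_def by blast
    have ta: "scale t a \<in> Z" using sZ a unfolding subspace_def by blast
    have sk: "scale s k \<in> K" using sK k unfolding subspace_def by blast
    have sb: "scale s b \<in> Z" using sZ b unfolding subspace_def by blast
    have diff: "scale s b - scale t a \<in> Z" using sZ sb ta by (rule subspace_diff)
    have "scale t n = scale s k + (scale s b - scale t a)"
      using x1 x2 by (simp add: algebra_simps)
    hence "scale t n \<in> sub_sum K Z" unfolding sub_sum_def using sk diff by blast
    hence "scale t n \<in> N \<inter> sub_sum K Z" using tn by blast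
    hence "scale t n \<in> sub_sum (N \<inter> K) (N \<inter> Z)"
      using assms(3) sN sK sZ unfolding distributive_module_def by blast
    then obtain c w where c: "c \<in> N \<inter> K" and w: "w \<in> N \<inter> Z" and cw: "scale t n = c + w"
      unfolding sub_sum_def by blast
    have "w + scale t a \<in> Z" using sZ w ta unfolding subspace_def by blast
    moreover have "x = c + (w + scale t a)" using x1 cw by (simp add: algebra_simps)
    ultimately show "x \<in> sub_sum (N \<inter> K) (colon scale {0} I)"
      unfolding sub_sum_def Z_def using c by blast
  qed
  moreover have "subspace (N \<inter> K)" using sN sK by (rule subspace_inter)
  ultimately show ?thesis unfolding S_copure_def using st by blast
qed

end
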